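(* Let $k\ge2$ be an integer and $m,n\in\mathbb Z$. Then $L_k^{(m)}L_k^{(n)}=L_k^{(m+n)}L_k^{(0)}=L_k^{(n)}L_k^{(m)}$.
   Context: Fix an integer $k\ge2$. Let $Q_k$ be the $k\times k$ matrix whose first row is all ones, with $(Q_k)_{i+1,i}=1$ for $1\le i\le k-1$ and all other entries $0$, and for $r\in\mathbb Z$ let $Q_k^r$ denote its $r$-th power. The generalized Lucas sequence of order $k$, $(l_{k,n})_{n\in\mathbb Z}$, is the two-sided sequence satisfying $l_{k,n+k}=l_{k,n+k-1}+\dots+l_{k,n}$ for all $n\in\mathbb Z$ with initial values $l_{k,r}=\operatorname{trace}(Q_k^r)$ for $0\le r\le k-1$ (so $l_{k,0}=k$ and $l_{k,r}=2^r-1$ for $1\le r\le k-1$). For $n\in\mathbb Z$ the generalized Lucas matrix $L_k^{(n)}$ is the $k\times k$ matrix with entries $(L_k^{(n)})_{i,1}=l_{k,k+n-i}$ and $(L_k^{(n)})_{i,j}=\sum_{m=n-i+j-1}^{k+n-i-1} l_{k,m}$ for $2\le j\le k$, $1\le i\le k$. *)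

theory Defs
  imports "Jordan_Normal_Form.Matrix"
begin

text \<open>Two-sided generalized Lucas sequence of order k:
  initial values l 0 = k, l r = 2^r - 1 for 1 <= r <= k-1,
  (k = 0 is a degenerate dummy case, never used since k >= 2);
  extended forwards by l n = l(n-1) + ... + l(n-k) (n >= k) and
  backwards by l n = l(n+k) - l(n+k-1) - ... - l(n+1) (n < 0).\<close>

function gen_lucas :: "nat \<Rightarrow> int \<Rightarrow> int" where
  "gen_lucas k n =
     (if k = 0 then 0
      else if 0 \<le> n \<and> n < int k then (if n = 0 then int k else 2 ^ nat n - 1)
      else if int k \<le> n then (\<Sum>j\<in>{1..int k}. gen_lucas k (n - j))
      else gen_lucas k (n + int k) - (\<Sum>j\<in>{1..int k - 1}. gen_lucas k (n + j)))"
  by pat_completeness auto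
termination
  by (relation "measure (\<lambda>(k, n). if 0 \<le> n then nat n else nat (- n) + k)") auto

text \<open>Generalized Lucas matrix L_k^(n) (0-indexed: row i0 = i-1, column j0 = j-1).\<close>
definition lucas_matrix :: "nat \<Rightarrow> int \<Rightarrow> int mat" where
  "lucas_matrix k n = mat k k (\<lambda>(i, j).
     if j = 0 then gen_lucas k (int k + n - int i - 1)
     else (\<Sum>m\<in>{n - int i + int j - 1 .. int k + n - int i - 2}. gen_lucas k m))"

end

theory Submission
  imports Defs
begin

declare gen_lucas.simps[simp del]

lemma gl_rec:
  assumes "k > 0"
  shows "gen_lucas k t = (\<Sum>j\<in>{1..int k}. gen_lucas k (t - j))"
proof (cases "t \<ge> int k")
  case True
  then show ?thesis using assms by (subst gen_lucas.simps) simp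
next
  case False
  have d: "gen_lucas k (t - int k) = gen_lucas k t - (\<Sum>j\<in>{1..int k - 1}. gen_lucas k (t - int k + j))"
    using assms False by (subst gen_lucas.simps) simp
  have r: "(\<Sum>j\<in>{1..int k - 1}. gen_lucas k (t - int k + j)) = (\<Sum>j\<in>{1..int k - 1}. gen_lucas k (t - j))"
    by (rule sum.reindex_bij_witness[of _ "\<lambda>j. int k - j" "\<lambda>j. int k - j"]) (auto simp: algebra_simps)
  have s: "{1..int k} = insert (int k) {1..int k - 1}" using assms by auto
  have "(\<Sum>j\<in>{1..int k}. gen_lucas k (t - j)) = gen_lucas k (t - int k) + (\<Sum>j\<in>{1..int k - 1}. gen_lucas k (t - j))"
    unfolding s by (subst sum.insert) auto
  then show ?thesis using d r by simp
qed

lemma gl_window: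
  assumes "k > 0"
  shows "(\<Sum>i<k. gen_lucas k (m - int i)) = gen_lucas k (m + 1)"
proof -
  have "(\<Sum>i<k. gen_lucas k (m - int i)) = (\<Sum>j\<in>{1..int k}. gen_lucas k (m + 1 - j))"
    by (rule sum.reindex_bij_witness[of _ "\<lambda>j. nat (j - 1)" "\<lambda>i. int i + 1"]) auto
  then show ?thesis using gl_rec[OF assms, of "m+1"] by simp
qed

lemma sum_shift_int:
  "(\<Sum>m\<in>{a..b::int}. f m) = (\<Sum>s\<in>{a-c..b-c}. f (s + c))"
  by (rule sum.reindex_bij_witness[of _ "\<lambda>s. s + c" "\<lambda>m. m - c"]) auto

lemma sum_top: "a \<le> b + 1 \<Longrightarrow> (\<Sum>m\<in>{a..b+1::int}. f m) = (\<Sum>m\<in>{a..b}. f m) + f (b + 1)"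
proof -
  assume "a \<le> b + 1"
  then have "{a..b+1} = insert (b+1) {a..b}" by auto
  then show ?thesis by (simp add: add.commute)
qed

lemma sum_window: "(\<Sum>m\<in>{b - int c + 1..b}. f m) = (\<Sum>t<c. f (b - int t))"
  by (rule sum.reindex_bij_witness[of _ "\<lambda>t. b - int t" "\<lambda>m. nat (b - m)"]) auto

definition qmat :: "nat \<Rightarrow> int mat" where
  "qmat k = mat k k (\<lambda>(i, j). if i = 0 \<or> i = j + 1 then 1 else 0)"

lemma lm_dims[simp]: "lucas_matrix k n \<in> carrier_mat k k"
  "dim_row (lucas_matrix k n) = k" "dim_col (lucas_matrix k n) = k"
  by (auto simp: lucas_matrix_def)

lemma q_dims[simp]: "qmat k \<in> carrier_mat k k"
  "dim_row (qmat k) = k" "dim_col (qmat k) = k"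
  by (auto simp: qmat_def)

lemma lm_idx: "i < k \<Longrightarrow> j < k \<Longrightarrow> lucas_matrix k n $$ (i, j) =
   (if j = 0 then gen_lucas k (int k + n - int i - 1)
     else (\<Sum>m\<in>{n - int i + int j - 1 .. int k + n - int i - 2}. gen_lucas k m))"
  by (simp add: lucas_matrix_def)

lemma mult_entry: "i < k \<Longrightarrow> j < k \<Longrightarrow> A \<in> carrier_mat k k \<Longrightarrow> B \<in> carrier_mat k k \<Longrightarrow>
  (A * B) $$ (i, j) = (\<Sum>t<k. A $$ (i, t) * B $$ (t, j))"
  by (auto simp: scalar_prod_def lessThan_atLeast0 intro!: sum.cong)

lemma QL_entry:
  assumes k: "k \<ge> 2" and ij: "i < k" "j < k"
  shows "(qmat k * lucas_matrix k n) $$ (i, j) = lucas_matrix k (n + 1) $$ (i, j)"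
proof -
  have e: "(qmat k * lucas_matrix k n) $$ (i, j) = (\<Sum>t<k. (if i = 0 \<or> i = t + 1 then 1 else 0) * lucas_matrix k n $$ (t, j))"
    unfolding mult_entry[OF ij q_dims(1) lm_dims(1)] using ij by (simp add: qmat_def)
  show ?thesis
  proof (cases "i = 0")
    case False
    have "(\<Sum>t<k. (if i = 0 \<or> i = t + 1 then 1 else 0) * lucas_matrix k n $$ (t, j))
        = (\<Sum>t<k. if t = i - 1 then lucas_matrix k n $$ (t, j) else 0)"
      using False by (intro sum.cong) auto
    also have "\<dots> = lucas_matrix k n $$ (i - 1, j)" using ij by simp
    also have "\<dots> = lucas_matrix k (n + 1) $$ (i, j)"
      using ij False by (simp add: lm_idx of_nat_diff algebra_simps)
    finally have "(\<Sum>t<k. (if i = 0 \<or> i = t + 1 then 1 else 0) * lucas_matrix k n $$ (t, j)) = lucas_matrix k (n + 1) $$ (i, j)" .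
    from e this show ?thesis by (rule trans)
  next
    case True
    have e2: "(qmat k * lucas_matrix k n) $$ (i, j) = (\<Sum>t<k. lucas_matrix k n $$ (t, j))"
      unfolding e using True by simp
    show ?thesis
    proof (cases "j = 0")
      case True
      have "(\<Sum>t<k. lucas_matrix k n $$ (t, j)) = (\<Sum>t<k. gen_lucas k ((int k + n - 1) - int t))"
        using True ij by (intro sum.cong) (auto simp: lm_idx algebra_simps)
      also have "\<dots> = gen_lucas k (int k + n)" using gl_window[of k "int k + n - 1"] k by simp
      also have "\<dots> = lucas_matrix k (n + 1) $$ (i, j)"
      proof -
        have "int k + (n + 1) - int i - 1 = int k + n" using \<open>i = 0\<close> by simp
        then show ?thesis unfolding lm_idx[OF ij] using True by simp
      qed
      finally have "(\<Sum>t<k. lucas_matrix k n $$ (t, j)) = lucas_matrix k (n + 1) $$ (i, j)" .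
      from e2 this show ?thesis by (rule trans)
    next
      case False
      have "(\<Sum>t<k. lucas_matrix k n $$ (t, j))
          = (\<Sum>t<k. \<Sum>s\<in>{int j - 1 .. int k - 2}. gen_lucas k ((n + s) - int t))"
      proof (intro sum.cong refl)
        fix t assume t: "t \<in> {..<k}"
        have "(\<Sum>m\<in>{n - int t + int j - 1 .. int k + n - int t - 2}. gen_lucas k m)
            = (\<Sum>s\<in>{int j - 1 .. int k - 2}. gen_lucas k ((n + s) - int t))"
          by (rule sum.reindex_bij_witness[of _ "\<lambda>s. n + s - int t" "\<lambda>m. m - n + int t"]) auto
        then show "lucas_matrix k n $$ (t, j) = (\<Sum>s\<in>{int j - 1 .. int k - 2}. gen_lucas k ((n + s) - int t))"
          using t False ij by (simp add: lm_idx)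
      qed
      also have "\<dots> = (\<Sum>s\<in>{int j - 1 .. int k - 2}. \<Sum>t<k. gen_lucas k ((n + s) - int t))"
        by (rule sum.swap)
      also have "\<dots> = (\<Sum>s\<in>{int j - 1 .. int k - 2}. gen_lucas k (s + (n + 1)))"
        using k by (intro sum.cong refl) (simp add: gl_window algebra_simps)
      also have "\<dots> = (\<Sum>m\<in>{n + int j .. int k + n - 1}. gen_lucas k m)"
        by (rule sum.reindex_bij_witness[of _ "\<lambda>m. m - (n + 1)" "\<lambda>s. s + (n + 1)"]) auto
      also have "\<dots> = lucas_matrix k (n + 1) $$ (i, j)"
      proof -
        have "int k + (n + 1) - int i - 2 = int k + n - 1" "n + 1 - int i + int j - 1 = n + int j"
          using \<open>i = 0\<close> by simp_all
        then show ?thesis unfolding lm_idx[OF ij] using False by simp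
      qed
      finally have "(\<Sum>t<k. lucas_matrix k n $$ (t, j)) = lucas_matrix k (n + 1) $$ (i, j)" .
      from e2 this show ?thesis by (rule trans)
    qed
  qed
qed

lemma QL: "k \<ge> 2 \<Longrightarrow> qmat k * lucas_matrix k n = lucas_matrix k (n + 1)"
  apply (rule eq_matI)
  apply (rule QL_entry)
  apply auto
  done

lemma LQ_entry:
  assumes k: "k \<ge> 2" and ij: "i < k" "j < k"
  shows "(lucas_matrix k n * qmat k) $$ (i, j) = lucas_matrix k (n + 1) $$ (i, j)"
proof -
  have "(lucas_matrix k n * qmat k) $$ (i, j) = (\<Sum>t<k. lucas_matrix k n $$ (i, t) * (if t = 0 \<or> t = j + 1 then 1 else 0))"
    unfolding mult_entry[OF ij lm_dims(1) q_dims(1)] using ij by (intro sum.cong refl) (simp add: qmat_def)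
  also have "\<dots> = (\<Sum>t\<in>{t. t < k \<and> (t = 0 \<or> t = j + 1)}. lucas_matrix k n $$ (i, t))"
    by (simp add: sum.inter_filter[symmetric] lessThan_def if_distrib cong: if_cong)
  also have "\<dots> = lucas_matrix k n $$ (i, 0) + (if j + 1 < k then lucas_matrix k n $$ (i, j + 1) else 0)"
  proof (cases "j + 1 < k")
    case True
    then have "{t. t < k \<and> (t = 0 \<or> t = j + 1)} = {0, j + 1}" by auto
    then show ?thesis using True by simp
  next
    case False
    then have "{t. t < k \<and> (t = 0 \<or> t = j + 1)} = {0}" using ij by auto
    then show ?thesis using False by simp
  qed
  also have "\<dots> = lucas_matrix k (n + 1) $$ (i, j)"
  proof (cases "j = 0")
    case True
    have "lucas_matrix k n $$ (i, 0) + lucas_matrix k n $$ (i, j + 1)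
        = gen_lucas k (int k + n - int i - 1) + (\<Sum>m\<in>{n - int i .. int k + n - int i - 2}. gen_lucas k m)"
      using True ij k by (simp add: lm_idx)
    also have "\<dots> = (\<Sum>m\<in>{n - int i .. int k + n - int i - 1}. gen_lucas k m)"
      using sum_top[of "n - int i" "int k + n - int i - 2" "gen_lucas k"] k by (simp add: algebra_simps)
    also have "\<dots> = (\<Sum>t<k. gen_lucas k (int k + n - int i - 1 - int t))"
      using sum_window[where b="int k + n - int i - 1" and c=k and f="gen_lucas k"] by (simp add: algebra_simps)
    also have "\<dots> = gen_lucas k (int k + n - int i)"
      using gl_window[of k "int k + n - int i - 1"] k by simp
    also have "\<dots> = lucas_matrix k (n + 1) $$ (i, j)"
      using True ij by (simp add: lm_idx algebra_simps)
    finally show ?thesis using True k by simp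
  next
    case False
    show ?thesis
    proof (cases "j + 1 < k")
      case True
      have "lucas_matrix k n $$ (i, 0) + lucas_matrix k n $$ (i, j + 1)
          = gen_lucas k (int k + n - int i - 1) + (\<Sum>m\<in>{n - int i + int j .. int k + n - int i - 2}. gen_lucas k m)"
        using True ij k by (simp add: lm_idx algebra_simps)
      also have "\<dots> = (\<Sum>m\<in>{n - int i + int j .. int k + n - int i - 1}. gen_lucas k m)"
        using sum_top[of "n - int i + int j" "int k + n - int i - 2" "gen_lucas k"] True by (simp add: algebra_simps)
      also have "\<dots> = lucas_matrix k (n + 1) $$ (i, j)"
        using False ij by (simp add: lm_idx algebra_simps)
      finally show ?thesis using True by simp
    next
      case j: False
      then have jk: "int j = int k - 1" using ij by simp
      have "{n + 1 - int i + int j - 1 .. int k + (n + 1) - int i - 2} = {int k + n - int i - 1}"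
        using jk by auto
      have e2: "{n + (int k - int i) - 1..int k + (n - int i) - 1} = {int k + n - int i - 1}" by auto
      have "lucas_matrix k (n + 1) $$ (i, j) = gen_lucas k (int k + n - int i - 1)"
        using False ij jk by (simp add: lm_idx e2)
      then show ?thesis using j ij by (simp add: lm_idx)
    qed
  qed
  finally show ?thesis .
qed

lemma LQ: "k \<ge> 2 \<Longrightarrow> lucas_matrix k n * qmat k = lucas_matrix k (n + 1)"
  apply (rule eq_matI)
  apply (rule LQ_entry)
  apply auto
  done

lemma const_int: "(\<And>m::int. f (m + 1) = f m) \<Longrightarrow> f m = f c"
proof (induct m rule: int_induct[where k = c])
  case base then show ?case by simp
next
  case (step1 i) then show ?case by simp
next
  case (step2 i) then show ?case by (metis diff_add_cancel)
qed

lemma prod_shift: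
  assumes k: "k \<ge> 2"
  shows "lucas_matrix k (m + 1) * lucas_matrix k (s - (m + 1)) = lucas_matrix k m * lucas_matrix k (s - m)"
proof -
  let ?Q = "qmat k" and ?A = "lucas_matrix k m" and ?B = "lucas_matrix k (s - (m + 1))"
  have "lucas_matrix k (m + 1) * ?B = (?Q * ?A) * ?B" using QL[OF k] by simp
  also have "\<dots> = (?A * ?Q) * ?B" using QL[OF k] LQ[OF k] by simp
  also have "\<dots> = ?A * (?Q * ?B)" by (rule assoc_mult_mat[of _ k k _ k _ k]) auto
  also have "\<dots> = ?A * lucas_matrix k (s - m)" using QL[OF k, of "s - (m + 1)"] by simp
  finally show ?thesis .
qed

theorem theorem5:
  fixes k :: nat and m n :: int
  assumes "k \<ge> 2"
  shows "lucas_matrix k m * lucas_matrix k n = lucas_matrix k (m + n) * lucas_matrix k 0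
       \<and> lucas_matrix k (m + n) * lucas_matrix k 0 = lucas_matrix k n * lucas_matrix k m"
proof -
  define f where "f x = lucas_matrix k x * lucas_matrix k (m + n - x)" for x
  have c: "f x = f (m + n)" for x
    by (rule const_int) (simp add: f_def prod_shift[OF assms])
  show ?thesis using c[of m] c[of n] by (simp add: f_def)
qed

end
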